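(* Let $(X,\delta,\mu)\in\mathcal{N}(\widetilde\tau,c_1,c_2)$. Then for every $x\in X$, every $r>0$ and every $\varepsilon>0$, \[\mu\Bigl(B_\delta\bigl(x,\tfrac{(1+\varepsilon)c_2}{c_1}r\bigr)\setminus B_\delta(x,r)\Bigr)\geq\varepsilon c_2r>0.\]
   Context: $(X,\delta,\mu)\in\mathcal{N}(\widetilde\tau,c_1,c_2)$ means: $\delta$ is a quasi-distance on $X$ (nonnegative, symmetric, vanishing exactly on the diagonal, with $\delta(x,z)\leq\widetilde\tau[\delta(x,y)+\delta(y,z)]$), $\mu$ is a positive measure on a $\sigma$-algebra containing the $\delta$-balls $B_\delta(x,r)=\{y:\delta(x,y)<r\}$, $\mu(\{x\})=0$ for all $x$, $\mu(X)=+\infty$, and $0<c_1<c_2<\infty$ satisfy $c_1r\leq\mu(B_\delta(x,r))\leq c_2r$ for every $x\in X$ and $r>0$ (an unbounded non-atomic normal space of homogeneous type). *)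

theory Defs
  imports "HOL-Analysis.Analysis"
begin

definition quasi_distance :: "'a set \<Rightarrow> ('a \<Rightarrow> 'a \<Rightarrow> real) \<Rightarrow> real \<Rightarrow> bool" where
  "quasi_distance X d tau \<longleftrightarrow>
     (\<forall>x\<in>X. \<forall>y\<in>X. d x y \<ge> 0) \<and>
     (\<forall>x\<in>X. \<forall>y\<in>X. d x y = d y x) \<and>
     (\<forall>x\<in>X. \<forall>y\<in>X. d x y = 0 \<longleftrightarrow> x = y) \<and>
     (\<forall>x\<in>X. \<forall>y\<in>X. \<forall>z\<in>X. d x z \<le> tau * (d x y + d y z))"

definition dball :: "'a set \<Rightarrow> ('a \<Rightarrow> 'a \<Rightarrow> real) \<Rightarrow> 'a \<Rightarrow> real \<Rightarrow> 'a set" where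
  "dball X d x r = {y\<in>X. d x y < r}"

text \<open>(X, delta, mu) in N(tau, c1, c2), with X = space M and mu = emeasure M.\<close>
definition normal_hom_space ::
  "'a measure \<Rightarrow> ('a \<Rightarrow> 'a \<Rightarrow> real) \<Rightarrow> real \<Rightarrow> real \<Rightarrow> real \<Rightarrow> bool" where
  "normal_hom_space M d tau c1 c2 \<longleftrightarrow>
     quasi_distance (space M) d tau \<and>
     (\<forall>x\<in>space M. \<forall>r. dball (space M) d x r \<in> sets M) \<and>
     (\<forall>x\<in>space M. {x} \<in> sets M \<and> emeasure M {x} = 0) \<and>
     emeasure M (space M) = \<infinity> \<and>
     0 < c1 \<and> c1 < c2 \<and>
     (\<forall>x\<in>space M. \<forall>r>0.
        ennreal (c1 * r) \<le> emeasure M (dball (space M) d x r) \<and>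
        emeasure M (dball (space M) d x r) \<le> ennreal (c2 * r))"

end

theory Submission
  imports Defs
begin

theorem lemma4p4:
  fixes M :: "'a measure" and d :: "'a \<Rightarrow> 'a \<Rightarrow> real"
    and tau c1 c2 r eps :: real and x :: 'a
  assumes "normal_hom_space M d tau c1 c2"
    and "x \<in> space M" and "r > 0" and "eps > 0"
  shows "emeasure M (dball (space M) d x ((1 + eps) * c2 / c1 * r) - dball (space M) d x r)
           \<ge> ennreal (eps * c2 * r)
         \<and> eps * c2 * r > 0"
proof -
  note A = assms(1)[unfolded normal_hom_space_def]
  have c1: "c1 > 0" and c2: "c2 > c1" using A by blast+
  have balls: "\<And>y s. y \<in> space M \<Longrightarrow> dball (space M) d y s \<in> sets M" using A by blast
  have bnd: "\<And>y s. y \<in> space M \<Longrightarrow> s > 0 \<Longrightarrow> ennreal (c1 * s) \<le> emeasure M (dball (space M) d y s) \<and>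
        emeasure M (dball (space M) d y s) \<le> ennreal (c2 * s)" using A by blast
  define R where "R = (1 + eps) * c2 / c1 * r"
  have c1R: "c1 * R = (1 + eps) * c2 * r" unfolding R_def using c1 by simp
  have "c2 / c1 > 1" using c1 c2 by simp
  hence "(1+eps) * (c2/c1) > 1" using assms(4)
  proof -
    have "(1+eps) * (c2/c1) > 1 * 1" using assms(4) \<open>c2 / c1 > 1\<close>
      by (intro mult_strict_mono) auto
    thus ?thesis by simp
  qed
  hence "r * 1 < r * ((1+eps) * (c2/c1))" using assms(3)
    by (intro mult_strict_left_mono) auto
  hence Rr: "R > r" unfolding R_def by (simp add: algebra_simps)
  have sub: "dball (space M) d x r \<subseteq> dball (space M) d x R"
    unfolding dball_def using Rr by auto
  have sR: "dball (space M) d x R \<in> sets M" and sr: "dball (space M) d x r \<in> sets M"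
    using balls assms(2) by auto
  have lo: "ennreal (c1 * R) \<le> emeasure M (dball (space M) d x R)"
    using bnd[OF assms(2), of R] assms(3) Rr by simp
  have hi: "emeasure M (dball (space M) d x r) \<le> ennreal (c2 * r)"
    using bnd[OF assms(2,3)] by simp
  have fin: "emeasure M (dball (space M) d x r) \<noteq> \<infinity>"
    using hi by (auto simp: top_unique)
  have eq: "emeasure M (dball (space M) d x R - dball (space M) d x r)
      = emeasure M (dball (space M) d x R) - emeasure M (dball (space M) d x r)"
    using emeasure_Diff[OF fin sR sr sub] .
  have "ennreal (eps * c2 * r) = ennreal (c1 * R - c2 * r)"
    using c1R by (simp add: algebra_simps)
  also have "\<dots> = ennreal (c1 * R) - ennreal (c2 * r)"
    using c1 c2 assms(3) by (intro ennreal_minus[symmetric]) auto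
  also have "\<dots> \<le> emeasure M (dball (space M) d x R) - emeasure M (dball (space M) d x r)"
    using lo hi by (intro ennreal_minus_mono) auto
  finally have "ennreal (eps * c2 * r) \<le> emeasure M (dball (space M) d x R - dball (space M) d x r)"
    using eq by simp
  moreover have "eps * c2 * r > 0" using assms(3,4) c1 c2 by simp
  ultimately show ?thesis unfolding R_def by simp
qed

end
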